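(* Let $\phi\in X_1$, $t>0$ and $a\in(0,\tfrac12)$, and let $u$ be the global viscosity solution. Then: if $u_t(\cdot,t)\le0$ in $(0,a)$, then $u_x(\cdot,t)\le U^*_x$ in $(0,a)$; and if $u_t(\cdot,t)\ge0$ in $(0,a)$ and $u_x(0,t)=\infty$, then $u_x(\cdot,t)\ge U^*_x$ in $(0,a)$.
   Context: $p>2$. Problem (1D): $u_t-u_{xx}=|u_x|^p$ on $(0,1)\times(0,\infty)$, $u(0,t)=u(1,t)=0$, $u(\cdot,0)=\phi$. $X_1=\{\phi\in C^1([0,1]):\phi\ge0,\phi(0)=\phi(1)=0\}$. The global viscosity solution $u$ is continuous on $[0,1]\times[0,\infty)$, belongs to $C^{2,1}((0,1)\times(0,\infty))$ and solves the PDE pointwise there, but possibly $u(0,t)>0$. For $t>0$, $u_x(0,t):=\lim_{x\to0^+}u_x(x,t)\in\mathbb R\cup\{+\infty\}$ exists. $\alpha=\frac{p-2}{p-1}$, $c_p=(p-2)^{-1}(p-1)^{(p-2)/(p-1)}$, $U^*(x)=c_px^\alpha$ (so $U^*_x(x)=((p-1)x)^{-1/(p-1)}$). *)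

theory Defs
  imports "HOL-Analysis.Analysis"
begin

definition X1 :: "(real \<Rightarrow> real) set" where
  "X1 = {\<phi>. (\<exists>\<phi>'. continuous_on {0..1} \<phi>' \<and>
               (\<forall>x\<in>{0..1}. (\<phi> has_real_derivative \<phi>' x) (at x within {0..1}))) \<and>
             (\<forall>x\<in>{0..1}. \<phi> x \<ge> 0) \<and> \<phi> 0 = 0 \<and> \<phi> 1 = 0}"

definition alpha_p :: "real \<Rightarrow> real" where
  "alpha_p p = (p - 2) / (p - 1)"

definition c_p :: "real \<Rightarrow> real" where
  "c_p p = (p - 1) powr ((p - 2) / (p - 1)) / (p - 2)"

definition Ustar :: "real \<Rightarrow> real \<Rightarrow> real" where
  "Ustar p x = c_p p * x powr alpha_p p"

definition Ustar_x :: "real \<Rightarrow> real \<Rightarrow> real" where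
  "Ustar_x p x = ((p - 1) * x) powr (- 1 / (p - 1))"

end

theory Submission
  imports Defs
begin

lemma core_deriv:
  fixes v d :: "real \<Rightarrow> real" and p x :: real
  assumes "DERIV v x :> d x" "v x > 0"
  shows "DERIV (\<lambda>x. v x powr (1-p) - (p-1)*x) x :> (1-p) * v x powr (-p) * d x - (p-1)"
proof -
  have "DERIV (\<lambda>x. v x powr (1-p)) x :> (1-p) * v x powr (1-p - of_nat 1) * d x"
    by (rule DERIV_fun_powr[OF assms])
  moreover have "DERIV (\<lambda>x. (p-1)*x) x :> (p-1)"
    using DERIV_cmult_Id by blast
  ultimately show ?thesis by (auto intro!: DERIV_diff)
qed

lemma key_prod:
  fixes v p :: real assumes "v > 0"
  shows "v powr (-p) * v powr p = 1"
  using assms by (simp add: powr_add[symmetric])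

lemma coreA:
  fixes v d :: "real \<Rightarrow> real" and p y z :: real
  assumes p: "p > 1" and yz: "y \<le> z"
    and der: "\<And>x. x \<in> {y..z} \<Longrightarrow> DERIV v x :> d x"
    and pos: "\<And>x. x \<in> {y..z} \<Longrightarrow> v x > 0"
    and dd: "\<And>x. x \<in> {y..z} \<Longrightarrow> d x \<le> -(v x powr p)"
  shows "v y powr (1-p) + (p-1)*(z-y) \<le> v z powr (1-p)"
proof -
  have "(\<lambda>x. v x powr (1-p) - (p-1)*x) y \<le> (\<lambda>x. v x powr (1-p) - (p-1)*x) z"
  proof (rule deriv_nonneg_imp_mono[OF _ _ yz])
    fix x assume x: "x \<in> {y..z}"
    show "((\<lambda>x. v x powr (1-p) - (p-1)*x) has_real_derivative (1-p) * v x powr (-p) * d x - (p-1)) (at x)"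
      using core_deriv der pos x by blast
    have q: "v x powr (-p) > 0" using pos[OF x] by simp
    have "(1-p) * v x powr (-p) * d x \<ge> (1-p) * v x powr (-p) * (-(v x powr p))"
      using dd[OF x] q p by (intro mult_left_mono_neg) (auto intro: mult_nonpos_nonneg)
    also have "(1-p) * v x powr (-p) * (-(v x powr p)) = (p-1) * (v x powr (-p) * v x powr p)"
      by (simp add: algebra_simps)
    also have "\<dots> = p - 1" using key_prod pos[OF x] by simp
    finally show "0 \<le> (1-p) * v x powr (-p) * d x - (p-1)" by simp
  qed
  then show ?thesis by (simp add: algebra_simps)
qed

lemma coreB:
  fixes v d :: "real \<Rightarrow> real" and p y z :: real
  assumes p: "p > 1" and yz: "y \<le> z"
    and der: "\<And>x. x \<in> {y..z} \<Longrightarrow> DERIV v x :> d x"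
    and pos: "\<And>x. x \<in> {y..z} \<Longrightarrow> v x > 0"
    and dd: "\<And>x. x \<in> {y..z} \<Longrightarrow> d x \<ge> -(v x powr p)"
  shows "v z powr (1-p) \<le> v y powr (1-p) + (p-1)*(z-y)"
proof -
  have "(\<lambda>x. v x powr (1-p) - (p-1)*x) z \<le> (\<lambda>x. v x powr (1-p) - (p-1)*x) y"
  proof (rule deriv_nonpos_imp_antimono[OF _ _ yz])
    fix x assume x: "x \<in> {y..z}"
    show "((\<lambda>x. v x powr (1-p) - (p-1)*x) has_real_derivative (1-p) * v x powr (-p) * d x - (p-1)) (at x)"
      using core_deriv der pos x by blast
    have q: "v x powr (-p) > 0" using pos[OF x] by simp
    have "(1-p) * v x powr (-p) * d x \<le> (1-p) * v x powr (-p) * (-(v x powr p))"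
      using dd[OF x] q p by (intro mult_left_mono_neg) (auto intro: mult_nonpos_nonneg)
    also have "(1-p) * v x powr (-p) * (-(v x powr p)) = (p-1) * (v x powr (-p) * v x powr p)"
      by (simp add: algebra_simps)
    also have "\<dots> = p - 1" using key_prod pos[OF x] by simp
    finally show "(1-p) * v x powr (-p) * d x - (p-1) \<le> 0" by simp
  qed
  then show ?thesis by (simp add: algebra_simps)
qed

lemma Ustar_pow:
  assumes "p > 1" "x > 0"
  shows "Ustar_x p x powr (1-p) = (p-1)*x" "Ustar_x p x > 0"
proof -
  have "Ustar_x p x powr (1-p) = ((p-1)*x) powr ((-1/(p-1))*(1-p))"
    unfolding Ustar_x_def by (simp add: powr_powr)
  also have "(-1/(p-1))*(1-p) = 1" using assms by (simp add: field_simps)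
  finally show "Ustar_x p x powr (1-p) = (p-1)*x" using assms by simp
  show "Ustar_x p x > 0" unfolding Ustar_x_def using assms by simp
qed


theorem lemma5p2:
  fixes p a t :: real and \<phi> :: "real \<Rightarrow> real"
    and u ux uxx ut :: "real \<Rightarrow> real \<Rightarrow> real"
  assumes p: "p > 2"
    and phi: "\<phi> \<in> X1"
    and t: "t > 0"
    and a: "0 < a" "a < 1/2"
    \<comment> \<open>properties of the global viscosity solution u\<close>
    and u_cont: "continuous_on ({0..1} \<times> {0..}) (\<lambda>(x, s). u x s)"
    and u_init: "\<forall>x\<in>{0..1}. u x 0 = \<phi> x"
    and u_x: "\<forall>x\<in>{0<..<1}. \<forall>s>0. ((\<lambda>y. u y s) has_real_derivative ux x s) (at x)"
    and u_xx: "\<forall>x\<in>{0<..<1}. \<forall>s>0. ((\<lambda>y. ux y s) has_real_derivative uxx x s) (at x)"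
    and u_t: "\<forall>x\<in>{0<..<1}. \<forall>s>0. ((\<lambda>r. u x r) has_real_derivative ut x s) (at s)"
    and ux_cont: "continuous_on ({0<..<1} \<times> {0<..}) (\<lambda>(x, s). ux x s)"
    and uxx_cont: "continuous_on ({0<..<1} \<times> {0<..}) (\<lambda>(x, s). uxx x s)"
    and ut_cont: "continuous_on ({0<..<1} \<times> {0<..}) (\<lambda>(x, s). ut x s)"
    and pde: "\<forall>x\<in>{0<..<1}. \<forall>s>0. ut x s - uxx x s = \<bar>ux x s\<bar> powr p"
    and ux0: "\<forall>s>0. \<exists>L::ereal. ((\<lambda>x. ereal (ux x s)) \<longlongrightarrow> L) (at_right 0)"
  shows "((\<forall>x\<in>{0<..<a}. ut x t \<le> 0) \<longrightarrow> (\<forall>x\<in>{0<..<a}. ux x t \<le> Ustar_x p x))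
       \<and> ((\<forall>x\<in>{0<..<a}. ut x t \<ge> 0) \<and> filterlim (\<lambda>x. ux x t) at_top (at_right 0)
            \<longrightarrow> (\<forall>x\<in>{0<..<a}. ux x t \<ge> Ustar_x p x))"
proof -
  define v where "v x = ux x t" for x
  define d where "d x = uxx x t" for x
  have p1: "p > 1" using p by simp
  have der: "DERIV v x :> d x" if "0 < x" "x < a" for x
    using u_xx that a t unfolding v_def d_def by auto
  have dv: "d x = ut x t - \<bar>v x\<bar> powr p" if "0 < x" "x < a" for x
    using pde that a t unfolding v_def d_def by force
  have part1: "v x0 \<le> Ustar_x p x0" if H: "\<forall>x\<in>{0<..<a}. ut x t \<le> 0" and x0: "0 < x0" "x0 < a" for x0
  proof (rule ccontr)
    assume "\<not> ?thesis"
    hence gt: "v x0 > Ustar_x p x0" by simp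
    have dle: "d x \<le> - (\<bar>v x\<bar> powr p)" if "0 < x" "x < a" for x
      using dv[OF that] H that by auto
    have mono: "v x0 \<le> v y" if "0 < y" "y \<le> x0" for y
    proof (rule deriv_nonpos_imp_antimono[OF _ _ that(2)])
      fix x assume "x \<in> {y..x0}"
      hence "0 < x" "x < a" using that x0 by auto
      thus "(v has_real_derivative d x) (at x)" "d x \<le> 0" using der dle[of x]
        by (auto intro: order_trans[of _ "-(\<bar>v x\<bar> powr p)"])
    qed
    have U0: "Ustar_x p x0 > 0" "Ustar_x p x0 powr (1-p) = (p-1)*x0"
      using Ustar_pow[OF p1 x0(1)] by auto
    define W where "W = v x0 powr (1-p)"
    have Wlt: "W < (p-1)*x0" unfolding W_def using powr_less_mono2_neg[of "1-p" "Ustar_x p x0" "v x0"] U0 gt p1 by simp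
    have Wpos: "W > 0" unfolding W_def using U0 gt by simp
    define y where "y = x0 - W/(p-1)"
    have y: "0 < y" "y \<le> x0" unfolding y_def using Wlt Wpos p1 by (auto simp: field_simps)
    have vpos: "v x > 0" if "x \<in> {y..x0}" for x using mono[of x] that y U0 gt by auto
    have "v y powr (1-p) + (p-1)*(x0-y) \<le> v x0 powr (1-p)"
    proof (rule coreA[OF p1 y(2)])
      fix x assume xx: "x \<in> {y..x0}"
      hence "0 < x" "x < a" using y x0 by auto
      thus "DERIV v x :> d x" using der by auto
      show "v x > 0" using vpos xx .
      show "d x \<le> -(v x powr p)" using dle[OF \<open>0 < x\<close> \<open>x < a\<close>] vpos[OF xx] by simp
    qed
    moreover have "(p-1)*(x0-y) = W" unfolding y_def using p1 by (simp add: field_simps)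
    moreover have "v y powr (1-p) > 0" using vpos[of y] y by simp
    ultimately show False unfolding W_def by simp
  qed
  have part2: "v x0 \<ge> Ustar_x p x0" if H: "\<forall>x\<in>{0<..<a}. ut x t \<ge> 0"
    and lim: "filterlim v at_top (at_right 0)" and x0: "0 < x0" "x0 < a" for x0
  proof (rule ccontr)
    assume "\<not> ?thesis"
    hence lt: "v x0 < Ustar_x p x0" by simp
    have dge: "d x \<ge> - (\<bar>v x\<bar> powr p)" if "0 < x" "x < a" for x
      using dv[OF that] H that by auto
    have U0: "Ustar_x p x0 > 0" "Ustar_x p x0 powr (1-p) = (p-1)*x0"
      using Ustar_pow[OF p1 x0(1)] by auto
    define b where "b = (max (v x0) 0 + Ustar_x p x0) / 2"
    have b: "b > 0" "v x0 < b" "b < Ustar_x p x0" unfolding b_def using U0 lt by auto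
    define c where "c = b powr (1-p) - (p-1)*x0"
    have "b powr (1-p) > Ustar_x p x0 powr (1-p)"
      using powr_less_mono2_neg[of "1-p" b "Ustar_x p x0"] b p1 by simp
    hence c: "c > 0" unfolding c_def using U0 by simp
    define K where "K = max b ((c/2) powr (1/(1-p)))"
    have "eventually (\<lambda>x. v x > K) (at_right 0)"
      using lim filterlim_at_top_dense by blast
    moreover have "eventually (\<lambda>x. 0 < x \<and> x < x0) (at_right (0::real))"
      using eventually_at_right_real[OF x0(1)] by simp
    ultimately have "eventually (\<lambda>x. v x > K \<and> 0 < x \<and> x < x0) (at_right 0)"
      by (rule eventually_conj)
    then obtain y where y: "v y > K" "0 < y" "y < x0"
      using eventually_happens[of _ "at_right (0::real)"] by (auto simp: trivial_limit_at_right_real)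
    have cont: "continuous_on {y..x0} v"
      proof (rule continuous_at_imp_continuous_on, intro ballI)
      fix x assume "x \<in> {y..x0}"
      hence "0 < x" "x < a" using y x0 by auto
      thus "isCont v x" using der DERIV_isCont by blast
    qed
    define S where "S = {y..x0} \<inter> v -` {..b}"
    have Sc: "closed S" unfolding S_def by (rule continuous_closed_preimage[OF cont]) auto
    have Sne: "x0 \<in> S" unfolding S_def using y b by auto
    have Sb: "bdd_below S" unfolding S_def by (auto intro: bdd_belowI[of _ y])
    define z where "z = Inf S"
    have zS: "z \<in> S" unfolding z_def using closed_contains_Inf[OF _ Sb Sc] Sne by auto
    have zle: "z \<le> x" if "x \<in> S" for x unfolding z_def using cInf_lower[OF that Sb] .
    have zr: "y \<le> z" "z \<le> x0" "v z \<le> b" using zS unfolding S_def by auto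
    have gtb: "v x > b" if "y \<le> x" "x < z" for x
    proof (rule ccontr)
      assume "\<not> v x > b"
      hence "x \<in> S" using that zr unfolding S_def by auto
      thus False using zle that by fastforce
    qed
    have vyb: "b \<le> v y" using y K_def by simp
    obtain w where w: "y \<le> w" "w \<le> z" "v w = b"
    proof -
      have "\<forall>x. y \<le> x \<and> x \<le> z \<longrightarrow> isCont v x"
      proof (intro allI impI)
        fix x assume "y \<le> x \<and> x \<le> z"
        hence "0 < x" "x < a" using y zr x0 by auto
        thus "isCont v x" using der DERIV_isCont by blast
      qed
      from IVT2[of v z b y, OF zr(3) vyb zr(1) this] show ?thesis using that by blast
    qed
    have "w \<in> S" using w zr unfolding S_def by auto
    hence "w = z" using zle w by fastforce
    hence vz: "v z = b" using w by simp
    have vpos: "v x \<ge> b" if "x \<in> {y..z}" for x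
      using that gtb[of x] vz by (cases "x = z") auto
    have "v z powr (1-p) \<le> v y powr (1-p) + (p-1)*(z-y)"
    proof (rule coreB[OF p1 zr(1)])
      fix x assume xx: "x \<in> {y..z}"
      hence "0 < x" "x < a" using y zr x0 by auto
      thus "DERIV v x :> d x" using der by auto
      show "v x > 0" using vpos[OF xx] b by simp
      show "d x \<ge> -(v x powr p)" using dge[OF \<open>0 < x\<close> \<open>x < a\<close>] vpos[OF xx] b by simp
    qed
    hence "b powr (1-p) \<le> v y powr (1-p) + (p-1)*x0"
    proof -
      have "(p-1)*(z-y) \<le> (p-1)*x0" using zr y p1 by (intro mult_left_mono) auto
      thus ?thesis using \<open>v z powr (1-p) \<le> v y powr (1-p) + (p-1)*(z-y)\<close> unfolding vz by linarith
    qed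
    hence ge: "v y powr (1-p) \<ge> c" unfolding c_def by simp
    define k where "k = (c/2) powr (1/(1-p))"
    have kpos: "k > 0" unfolding k_def using c by simp
    have kk: "k powr (1-p) = c/2" unfolding k_def using c p1 by (simp add: powr_powr)
    have "v y > k" using y unfolding K_def k_def by simp
    hence "v y powr (1-p) < k powr (1-p)" using powr_less_mono2_neg[of "1-p" k "v y"] kpos p1 by simp
    thus False using ge kk c by simp
  qed
  show ?thesis
  proof (intro conjI impI ballI)
    fix x assume "\<forall>x\<in>{0<..<a}. ut x t \<le> 0" "x \<in> {0<..<a}"
    thus "ux x t \<le> Ustar_x p x" using part1 unfolding v_def by auto
  next
    fix x assume A: "(\<forall>x\<in>{0<..<a}. 0 \<le> ut x t) \<and> filterlim (\<lambda>x. ux x t) at_top (at_right 0)" "x \<in> {0<..<a}"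
    have "filterlim v at_top (at_right 0)" using A unfolding v_def by simp
    thus "Ustar_x p x \<le> ux x t" using part2 A unfolding v_def by auto
  qed
qed

end
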